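(* Let $T_1$ and $T_2$ be countable IILU-theories in the same predicate language $\Sigma$, and suppose that the restriction $T'_1$ of $T_1$ to the symbols that are non-empty for $T_1$ is language similar to the restriction $T'_2$ of $T_2$ to the symbols that are non-empty for $T_2$. Then $T_1$ and $T_2$ are language similar.
   Context: Theories are complete theories in predicate (relational) languages. A predicate symbol $R$ is non-empty for $T$ if $T\vdash\exists\bar x R(\bar x)$, and empty otherwise. A theory $T$ in a predicate language $\Sigma$ is language uniform (an LU-theory) if for each arity $n$, every permutation of the set of $n$-ary symbols that are non-empty for $T$ preserves $T$ (i.e., replacing each such symbol by its image maps $T$ onto $T$). An LU-theory $T$ is an IILU-theory if it has non-empty predicates and, whenever there is a non-empty $n$-ary predicate, there are infinitely many non-empty $n$-ary predicates and infinitely many empty $n$-ary predicates. A theory is countable if its language is countable. Theories $T_0,T_1$ in languages $\Sigma_0,\Sigma_1$ are language similar if $T_0$ can be obtained from $T_1$ by a bijective (arity-preserving) replacement of the symbols of $\Sigma_1$ by the symbols of $\Sigma_0$. *)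

theory Defs
  imports Main "HOL-Library.Countable_Set"
begin

text \<open>Predicate symbols have type 'p; a language is a set of symbols Sigma together with
  an arity function ar.\<close>

datatype 'p fm =
    Eq nat nat
  | Rel 'p "nat list"
  | Neg "'p fm"
  | Conj "'p fm" "'p fm"
  | Ex nat "'p fm"

fun syms :: "'p fm \<Rightarrow> 'p set" where
  "syms (Eq x y) = {}"
| "syms (Rel p xs) = {p}"
| "syms (Neg f) = syms f"
| "syms (Conj f g) = syms f \<union> syms g"
| "syms (Ex x f) = syms f"

fun wf_fm :: "'p set \<Rightarrow> ('p \<Rightarrow> nat) \<Rightarrow> 'p fm \<Rightarrow> bool" where
  "wf_fm S ar (Eq x y) = True"
| "wf_fm S ar (Rel p xs) = (p \<in> S \<and> length xs = ar p)"
| "wf_fm S ar (Neg f) = wf_fm S ar f"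
| "wf_fm S ar (Conj f g) = (wf_fm S ar f \<and> wf_fm S ar g)"
| "wf_fm S ar (Ex x f) = wf_fm S ar f"

fun fv :: "'p fm \<Rightarrow> nat set" where
  "fv (Eq x y) = {x, y}"
| "fv (Rel p xs) = set xs"
| "fv (Neg f) = fv f"
| "fv (Conj f g) = fv f \<union> fv g"
| "fv (Ex x f) = fv f - {x}"

definition sentence :: "'p set \<Rightarrow> ('p \<Rightarrow> nat) \<Rightarrow> 'p fm \<Rightarrow> bool" where
  "sentence S ar f \<longleftrightarrow> wf_fm S ar f \<and> fv f = {}"

fun sat :: "'d set \<Rightarrow> ('p \<Rightarrow> 'd list \<Rightarrow> bool) \<Rightarrow> (nat \<Rightarrow> 'd) \<Rightarrow> 'p fm \<Rightarrow> bool" where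
  "sat D I e (Eq x y) = (e x = e y)"
| "sat D I e (Rel p xs) = I p (map e xs)"
| "sat D I e (Neg f) = (\<not> sat D I e f)"
| "sat D I e (Conj f g) = (sat D I e f \<and> sat D I e g)"
| "sat D I e (Ex x f) = (\<exists>d\<in>D. sat D I (e(x := d)) f)"

definition Th :: "'p set \<Rightarrow> ('p \<Rightarrow> nat) \<Rightarrow> 'd set \<Rightarrow> ('p \<Rightarrow> 'd list \<Rightarrow> bool) \<Rightarrow> 'p fm set" where
  "Th S ar D I = {f. sentence S ar f \<and> sat D I (\<lambda>_. SOME d. d \<in> D) f}"

definition complete_theory :: "'d itself \<Rightarrow> 'p set \<Rightarrow> ('p \<Rightarrow> nat) \<Rightarrow> 'p fm set \<Rightarrow> bool" where
  "complete_theory _ S ar T \<longleftrightarrow>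
     (\<exists>(D::'d set) I. D \<noteq> {} \<and> T = Th S ar D I)"

definition exists_rel :: "('p \<Rightarrow> nat) \<Rightarrow> 'p \<Rightarrow> 'p fm" where
  "exists_rel ar p = foldr Ex [0..<ar p] (Rel p [0..<ar p])"

text \<open>Non-empty symbol: T proves \<exists>x. R(x). Since T is a complete (deductively closed)
  theory, provability is membership.\<close>
definition nonempty_sym :: "('p \<Rightarrow> nat) \<Rightarrow> 'p fm set \<Rightarrow> 'p \<Rightarrow> bool" where
  "nonempty_sym ar T p \<longleftrightarrow> exists_rel ar p \<in> T"

definition nonempty_syms :: "'p set \<Rightarrow> ('p \<Rightarrow> nat) \<Rightarrow> 'p fm set \<Rightarrow> 'p set" where
  "nonempty_syms S ar T = {p \<in> S. nonempty_sym ar T p}"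

definition LU_theory :: "'p set \<Rightarrow> ('p \<Rightarrow> nat) \<Rightarrow> 'p fm set \<Rightarrow> bool" where
  "LU_theory S ar T \<longleftrightarrow>
     (\<forall>n \<pi>. bij_betw \<pi> {p \<in> nonempty_syms S ar T. ar p = n} {p \<in> nonempty_syms S ar T. ar p = n}
            \<and> (\<forall>p. p \<notin> {p \<in> nonempty_syms S ar T. ar p = n} \<longrightarrow> \<pi> p = p)
        \<longrightarrow> map_fm \<pi> ` T = T)"

definition IILU_theory :: "'p set \<Rightarrow> ('p \<Rightarrow> nat) \<Rightarrow> 'p fm set \<Rightarrow> bool" where
  "IILU_theory S ar T \<longleftrightarrow>
     LU_theory S ar T \<and> nonempty_syms S ar T \<noteq> {} \<and>
     (\<forall>n. (\<exists>p \<in> nonempty_syms S ar T. ar p = n) \<longrightarrow>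
          infinite {p \<in> nonempty_syms S ar T. ar p = n} \<and>
          infinite {p \<in> S - nonempty_syms S ar T. ar p = n})"

definition restrict_th :: "'p set \<Rightarrow> 'p fm set \<Rightarrow> 'p fm set" where
  "restrict_th S' T = {f \<in> T. syms f \<subseteq> S'}"

definition language_similar ::
    "('p \<Rightarrow> nat) \<Rightarrow> 'p fm set \<Rightarrow> 'p set \<Rightarrow> 'p fm set \<Rightarrow> 'p set \<Rightarrow> bool" where
  "language_similar ar T0 S0 T1 S1 \<longleftrightarrow>
     (\<exists>\<sigma>. bij_betw \<sigma> S1 S0 \<and> (\<forall>p \<in> S1. ar (\<sigma> p) = ar p) \<and> map_fm \<sigma> ` T1 = T0)"

end

theory Submission
  imports Defs
begin

definition FF :: "'p fm" where "FF = Ex 0 (Neg (Eq 0 0))"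

fun elim :: "'p set \<Rightarrow> 'p fm \<Rightarrow> 'p fm" where
  "elim N (Eq x y) = Eq x y"
| "elim N (Rel p xs) = (if p \<in> N then Rel p xs else FF)"
| "elim N (Neg f) = Neg (elim N f)"
| "elim N (Conj f g) = Conj (elim N f) (elim N g)"
| "elim N (Ex x f) = Ex x (elim N f)"

lemma syms_elim: "syms (elim N f) \<subseteq> N"
  by (induction f) (auto simp: FF_def)

lemma wf_elim: "wf_fm S ar f \<Longrightarrow> wf_fm S ar (elim N f)"
  by (induction f) (auto simp: FF_def)

lemma fv_elim: "fv (elim N f) \<subseteq> fv f"
  by (induction f) (auto simp: FF_def)

lemma sat_FF: "\<not> sat D I e FF"
  by (simp add: FF_def)

lemma fv_map: "fv (map_fm \<sigma> f) = fv f"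
  by (induction f) auto

lemma syms_map: "syms (map_fm \<sigma> f) = \<sigma> ` syms f"
  by (induction f) auto

lemma wf_map: "wf_fm S ar f \<Longrightarrow> (\<forall>p\<in>S. \<sigma> p \<in> S \<and> ar (\<sigma> p) = ar p) \<Longrightarrow> wf_fm S ar (map_fm \<sigma> f)"
  by (induction f) auto

lemma wf_syms: "wf_fm S ar f \<Longrightarrow> syms f \<subseteq> S"
  by (induction f) auto

lemma map_elim: "syms f \<subseteq> S \<Longrightarrow> (\<forall>p\<in>S. \<sigma> p \<in> N1 \<longleftrightarrow> p \<in> N2) \<Longrightarrow>
   map_fm \<sigma> (elim N2 f) = elim N1 (map_fm \<sigma> f)"
  by (induction f) (auto simp: FF_def)

lemma map_cong': "(\<forall>p\<in>syms f. \<sigma> p = \<tau> p) \<Longrightarrow> map_fm \<sigma> f = map_fm \<tau> f"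
  by (induction f) auto

lemma map_comp': "map_fm \<sigma> (map_fm \<tau> f) = map_fm (\<sigma> \<circ> \<tau>) f"
  by (induction f) auto

fun upds :: "(nat \<Rightarrow> 'd) \<Rightarrow> nat list \<Rightarrow> 'd list \<Rightarrow> nat \<Rightarrow> 'd" where
  "upds e (v#vs) (d#ds) = upds (e(v:=d)) vs ds"
| "upds e _ _ = e"

lemma sat_foldr: "set ds \<subseteq> D \<Longrightarrow> length ds = length vs \<Longrightarrow> sat D I (upds e vs ds) g
   \<Longrightarrow> sat D I e (foldr Ex vs g)"
proof (induction vs arbitrary: e ds)
  case Nil then show ?case by simp
next
  case (Cons v vs)
  then obtain d ds' where ds: "ds = d # ds'" by (cases ds) auto
  have h1: "set ds' \<subseteq> D" "length ds' = length vs" "sat D I (upds (e(v:=d)) vs ds') g"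
    using Cons.prems ds by auto
  have "sat D I (e(v:=d)) (foldr Ex vs g)" by (rule Cons.IH[OF h1])
  moreover have "d \<in> D" using Cons.prems ds by simp
  ultimately show ?case by auto
qed

lemma upds_notin: "x \<notin> set vs \<Longrightarrow> upds e vs ds x = e x"
proof (induction vs arbitrary: e ds)
  case Nil then show ?case by simp
next
  case (Cons v vs) then show ?case by (cases ds) auto
qed

lemma map_upds: "distinct vs \<Longrightarrow> length ds = length vs \<Longrightarrow> map (upds e vs ds) vs = ds"
proof (induction vs arbitrary: e ds)
  case Nil then show ?case by simp
next
  case (Cons v vs)
  then obtain d ds' where ds: "ds = d # ds'" by (cases ds) auto
  show ?case using Cons ds upds_notin[of v vs "e(v:=d)" ds'] by auto
qed

lemma wf_foldr: "wf_fm S ar (foldr Ex vs g) = wf_fm S ar g"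
  by (induction vs) auto

lemma fv_foldr: "fv (foldr Ex vs g) = fv g - set vs"
  by (induction vs) auto

lemma empty_rel:
  assumes "D \<noteq> {}" "p \<in> S" "p \<notin> nonempty_syms S ar (Th S ar D I)" "set ds \<subseteq> D" "length ds = ar p"
  shows "\<not> I p ds"
proof
  assume I: "I p ds"
  define e0 where "e0 = (\<lambda>_::nat. SOME d. d \<in> D)"
  have "sat D I (upds e0 [0..<ar p] ds) (Rel p [0..<ar p])"
    using map_upds[of "[0..<ar p]" ds e0] assms(5) I by simp
  then have "sat D I e0 (exists_rel ar p)"
    unfolding exists_rel_def using sat_foldr[of ds D "[0..<ar p]" I e0] assms by simp
  moreover have "sentence S ar (exists_rel ar p)"
    unfolding sentence_def exists_rel_def using assms(2) by (simp add: wf_foldr fv_foldr)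
  ultimately have "exists_rel ar p \<in> Th S ar D I" unfolding Th_def e0_def by simp
  then show False using assms(2,3) by (simp add: nonempty_syms_def nonempty_sym_def)
qed

lemma sat_elim:
  assumes "D \<noteq> {}"
  shows "wf_fm S ar f \<Longrightarrow> \<forall>x. e x \<in> D \<Longrightarrow>
    sat D I e f = sat D I e (elim (nonempty_syms S ar (Th S ar D I)) f)"
proof (induction f arbitrary: e)
  case (Rel p xs)
  show ?case
  proof (cases "p \<in> nonempty_syms S ar (Th S ar D I)")
    case False
    have "\<not> I p (map e xs)"
      using empty_rel[OF assms, of p S ar I "map e xs"] Rel False by auto
    then show ?thesis using False by (simp add: sat_FF)
  qed simp
qed auto

lemma nonempty_sub: "nonempty_syms S ar T \<subseteq> S"
  by (auto simp: nonempty_syms_def)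

lemma glue:
  assumes "\<And>n. bij_betw (f n) {p\<in>A. ar p = n} {p\<in>B. ar p = n}"
  shows "bij_betw (\<lambda>p. f (ar p) p) A B"
  unfolding bij_betw_def
proof
  have im: "p \<in> A \<Longrightarrow> f (ar p) p \<in> B \<and> ar (f (ar p) p) = ar p" for p
    using assms[of "ar p"] unfolding bij_betw_def by blast
  show "inj_on (\<lambda>p. f (ar p) p) A"
  proof (rule inj_onI)
    fix p q assume pq: "p \<in> A" "q \<in> A" "f (ar p) p = f (ar q) q"
    then have "ar p = ar q" using im by metis
    then show "p = q" using pq assms[of "ar p"] unfolding bij_betw_def inj_on_def by auto
  qed
  show "(\<lambda>p. f (ar p) p) ` A = B"
  proof
    show "(\<lambda>p. f (ar p) p) ` A \<subseteq> B" using im by auto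
    show "B \<subseteq> (\<lambda>p. f (ar p) p) ` A"
    proof
      fix q assume q: "q \<in> B"
      then have "q \<in> f (ar q) ` {p\<in>A. ar p = ar q}" using assms[of "ar q"] unfolding bij_betw_def by auto
      then obtain p where "p \<in> A" "ar p = ar q" "q = f (ar q) p" by auto
      then show "q \<in> (\<lambda>p. f (ar p) p) ` A" by force
    qed
  qed
qed

theorem corollary4p3:
  fixes S :: "'p set" and ar :: "'p \<Rightarrow> nat" and T1 T2 :: "'p fm set"
  assumes "countable S"
    and "complete_theory TYPE('d1) S ar T1"
    and "complete_theory TYPE('d2) S ar T2"
    and "IILU_theory S ar T1"
    and "IILU_theory S ar T2"
    and "language_similar ar
           (restrict_th (nonempty_syms S ar T1) T1) (nonempty_syms S ar T1)
           (restrict_th (nonempty_syms S ar T2) T2) (nonempty_syms S ar T2)"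
  shows "language_similar ar T1 S T2 S"
proof -
  obtain D1 :: "'d1 set" and I1 where D1: "D1 \<noteq> {}" "T1 = Th S ar D1 I1"
    using assms(2) unfolding complete_theory_def by blast
  obtain D2 :: "'d2 set" and I2 where D2: "D2 \<noteq> {}" "T2 = Th S ar D2 I2"
    using assms(3) unfolding complete_theory_def by blast
  define N1 where "N1 = nonempty_syms S ar T1"
  define N2 where "N2 = nonempty_syms S ar T2"
  have N1S: "N1 \<subseteq> S" and N2S: "N2 \<subseteq> S" unfolding N1_def N2_def by (rule nonempty_sub)+
  obtain \<sigma>0 where s0: "bij_betw \<sigma>0 N2 N1" "\<forall>p\<in>N2. ar (\<sigma>0 p) = ar p"
     "map_fm \<sigma>0 ` restrict_th N2 T2 = restrict_th N1 T1"
    using assms(6) unfolding language_similar_def N1_def N2_def by blast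
  have ex: "\<exists>g. bij_betw g {p\<in>S-N2. ar p = n} {p\<in>S-N1. ar p = n}" for n
  proof (cases "\<exists>p\<in>N2. ar p = n")
    case True
    then obtain p where p: "p \<in> N2" "ar p = n" by blast
    have iA: "infinite {p\<in>S-N2. ar p = n}" using assms(5) True unfolding IILU_theory_def N2_def by blast
    have "\<sigma>0 p \<in> N1" "ar (\<sigma>0 p) = n" using p s0 by (auto simp: bij_betw_def)
    then have iB: "infinite {p\<in>S-N1. ar p = n}" using assms(4) unfolding IILU_theory_def N1_def by blast
    have cA: "countable {p\<in>S-N2. ar p = n}" "countable {p\<in>S-N1. ar p = n}"
      using assms(1) by (auto intro: countable_subset)
    obtain g1 where g1: "bij_betw g1 {p\<in>S-N2. ar p = n} (UNIV::nat set)"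
      using countableE_infinite[OF cA(1) iA] by blast
    obtain g2 where g2: "bij_betw g2 {p\<in>S-N1. ar p = n} (UNIV::nat set)"
      using countableE_infinite[OF cA(2) iB] by blast
    show ?thesis using bij_betw_trans[OF g1 bij_betw_inv_into[OF g2]] by blast
  next
    case False
    have "\<not> (\<exists>q\<in>N1. ar q = n)"
    proof
      assume "\<exists>q\<in>N1. ar q = n"
      then obtain q where q: "q \<in> N1" "ar q = n" by blast
      then obtain p where "p \<in> N2" "q = \<sigma>0 p" using s0(1) by (auto simp: bij_betw_def)
      then show False using False q s0(2) by auto
    qed
    then have "{p\<in>S-N2. ar p = n} = {p\<in>S-N1. ar p = n}" using False N1S N2S by auto
    then show ?thesis using bij_betw_id by metis
  qed
  then obtain g where g: "\<And>n. bij_betw (g n) {p\<in>S-N2. ar p = n} {p\<in>S-N1. ar p = n}" by metis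
  define \<tau> where "\<tau> = (\<lambda>p. g (ar p) p)"
  have tb: "bij_betw \<tau> (S-N2) (S-N1)" unfolding \<tau>_def by (rule glue[OF g])
  have tar: "p \<in> S-N2 \<Longrightarrow> ar (\<tau> p) = ar p" for p
    using g[of "ar p"] unfolding \<tau>_def bij_betw_def by blast
  define \<sigma> where "\<sigma> = (\<lambda>p. if p \<in> N2 then \<sigma>0 p else \<tau> p)"
  have b1: "bij_betw \<sigma> N2 N1" using s0(1) by (rule bij_betw_cong[THEN iffD1, rotated]) (simp add: \<sigma>_def)
  have b2: "bij_betw \<sigma> (S-N2) (S-N1)" using tb by (rule bij_betw_cong[THEN iffD1, rotated]) (simp add: \<sigma>_def)
  have sb: "bij_betw \<sigma> S S"
  proof -
    have "bij_betw \<sigma> (N2 \<union> (S-N2)) (N1 \<union> (S-N1))" by (rule bij_betw_combine[OF b1 b2]) auto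
    moreover have "N2 \<union> (S-N2) = S" "N1 \<union> (S-N1) = S" using N1S N2S by auto
    ultimately show ?thesis by simp
  qed
  have sar: "\<forall>p\<in>S. ar (\<sigma> p) = ar p" using s0(2) tar by (auto simp: \<sigma>_def)
  have sS: "\<forall>p\<in>S. \<sigma> p \<in> S \<and> ar (\<sigma> p) = ar p" using sar sb by (auto simp: bij_betw_def)
  have sN: "\<forall>p\<in>S. \<sigma> p \<in> N1 \<longleftrightarrow> p \<in> N2"
    using b1 b2 by (auto simp: bij_betw_def)
  have inj0: "g' \<in> restrict_th N2 T2 \<longleftrightarrow> map_fm \<sigma>0 g' \<in> restrict_th N1 T1" if sg: "syms g' \<subseteq> N2" for g'
  proof
    assume "g' \<in> restrict_th N2 T2" then show "map_fm \<sigma>0 g' \<in> restrict_th N1 T1" using s0(3) by blast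
  next
    assume "map_fm \<sigma>0 g' \<in> restrict_th N1 T1"
    then obtain h where h: "h \<in> restrict_th N2 T2" "map_fm \<sigma>0 h = map_fm \<sigma>0 g'" using s0(3) by force
    have sh: "syms h \<subseteq> N2" using h(1) by (simp add: restrict_th_def)
    have inj: "inj_on \<sigma>0 N2" using s0(1) by (simp add: bij_betw_def)
    have "map_fm (inv_into N2 \<sigma>0) (map_fm \<sigma>0 h) = h"
      unfolding map_comp' using sh inj by (subst map_cong'[where \<tau>=id]) (auto simp: fm.map_id)
    moreover have "map_fm (inv_into N2 \<sigma>0) (map_fm \<sigma>0 g') = g'"
      unfolding map_comp' using sg inj by (subst map_cong'[where \<tau>=id]) (auto simp: fm.map_id)
    ultimately have "h = g'" using h(2) by metis
    then show "g' \<in> restrict_th N2 T2" using h(1) by simp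
  qed
  have claim: "f \<in> T2 \<longleftrightarrow> map_fm \<sigma> f \<in> T1" if sf: "sentence S ar f" for f
  proof -
    define e1 where "e1 = (\<lambda>_::nat. SOME d. d \<in> D1)"
    define e2 where "e2 = (\<lambda>_::nat. SOME d. d \<in> D2)"
    have e1D: "\<forall>x. e1 x \<in> D1" using D1(1) by (simp add: e1_def some_in_eq)
    have e2D: "\<forall>x. e2 x \<in> D2" using D2(1) by (simp add: e2_def some_in_eq)
    have wf: "wf_fm S ar f" "fv f = {}" using sf by (auto simp: sentence_def)
    have fsS: "syms f \<subseteq> S" using wf_syms wf by blast
    have wfm: "wf_fm S ar (map_fm \<sigma> f)" using wf_map[OF wf(1) sS] .
    have se2: "sentence S ar (elim N2 f)" using wf wf_elim fv_elim unfolding sentence_def by blast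
    have se1: "sentence S ar (elim N1 (map_fm \<sigma> f))" using wfm wf wf_elim fv_elim fv_map
      unfolding sentence_def by (metis subset_empty)
    have sm: "sentence S ar (map_fm \<sigma> f)" using wfm wf fv_map unfolding sentence_def by metis
    have "f \<in> T2 \<longleftrightarrow> sat D2 I2 e2 f" using D2(2) sf by (simp add: Th_def e2_def)
    also have "\<dots> \<longleftrightarrow> sat D2 I2 e2 (elim N2 f)"
      using sat_elim[OF D2(1) wf(1) e2D] D2(2) N2_def by simp
    also have "\<dots> \<longleftrightarrow> elim N2 f \<in> T2" using D2(2) se2 by (simp add: Th_def e2_def)
    also have "\<dots> \<longleftrightarrow> elim N2 f \<in> restrict_th N2 T2" unfolding restrict_th_def using syms_elim[of N2 f] by blast
    also have "\<dots> \<longleftrightarrow> map_fm \<sigma>0 (elim N2 f) \<in> restrict_th N1 T1" by (rule inj0[OF syms_elim])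
    also have "map_fm \<sigma>0 (elim N2 f) = map_fm \<sigma> (elim N2 f)"
      using syms_elim[of N2 f] by (intro map_cong') (auto simp: \<sigma>_def)
    also have "\<dots> = elim N1 (map_fm \<sigma> f)" using map_elim[OF fsS sN] .
    also have "elim N1 (map_fm \<sigma> f) \<in> restrict_th N1 T1 \<longleftrightarrow> elim N1 (map_fm \<sigma> f) \<in> T1"
      unfolding restrict_th_def using syms_elim[of N1 "map_fm \<sigma> f"] by blast
    also have "\<dots> \<longleftrightarrow> sat D1 I1 e1 (elim N1 (map_fm \<sigma> f))" using D1(2) se1 by (simp add: Th_def e1_def)
    also have "\<dots> \<longleftrightarrow> sat D1 I1 e1 (map_fm \<sigma> f)"
      using sat_elim[OF D1(1) wfm e1D] D1(2) N1_def by simp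
    also have "\<dots> \<longleftrightarrow> map_fm \<sigma> f \<in> T1" using D1(2) sm by (simp add: Th_def e1_def)
    finally show ?thesis .
  qed
  have "map_fm \<sigma> ` T2 = T1"
  proof
    show "map_fm \<sigma> ` T2 \<subseteq> T1" using claim D2(2) by (auto simp: Th_def)
    show "T1 \<subseteq> map_fm \<sigma> ` T2"
    proof
      fix h assume h: "h \<in> T1"
      then have sh: "sentence S ar h" using D1(2) by (simp add: Th_def)
      define f where "f = map_fm (inv_into S \<sigma>) h"
      have hS: "syms h \<subseteq> S" using sh wf_syms by (auto simp: sentence_def)
      have iS: "\<forall>p\<in>S. inv_into S \<sigma> p \<in> S \<and> ar (inv_into S \<sigma> p) = ar p"
      proof
        fix p assume p: "p \<in> S"
        have "inv_into S \<sigma> p \<in> S" using p sb by (metis bij_betw_def inv_into_into)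
        moreover have "\<sigma> (inv_into S \<sigma> p) = p" using p sb by (simp add: bij_betw_inv_into_right)
        ultimately show "inv_into S \<sigma> p \<in> S \<and> ar (inv_into S \<sigma> p) = ar p" using sar by metis
      qed
      have sf: "sentence S ar f" using sh wf_map[OF _ iS] fv_map unfolding sentence_def f_def by metis
      have "map_fm \<sigma> f = h" unfolding f_def map_comp' using hS sb
        by (subst map_cong'[where \<tau>=id]) (auto simp: fm.map_id bij_betw_inv_into_right)
      then have "f \<in> T2" using claim[OF sf] h by simp
      then show "h \<in> map_fm \<sigma> ` T2" using \<open>map_fm \<sigma> f = h\<close> by blast
    qed
  qed
  then show ?thesis unfolding language_similar_def using sb sar by blast
qed

end
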